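(* Let $Q$ be a positive definite quadratic form on $\mathbb{R}^2$, let $\Lambda\subseteq\mathbb{R}^2$ be a lattice of rank $2$, and let $v\in\mathbb{R}^2$. Let $c=\min_{w\in\Lambda}Q(v-w)$ and $\lambda=\min_{w\in\Lambda\setminus\{0\}}Q(w)$. Then there exists a set $P\subseteq\Lambda$ of four points forming the vertices of a translated fundamental parallelogram of $\Lambda$ (i.e. $P=\{w_0,w_0+u_1,w_0+u_2,w_0+u_1+u_2\}$ with $w_0\in\Lambda$ and $u_1,u_2$ a basis of $\Lambda$) such that $Q(v-w)\ge c+\lambda$ for all $w\in\Lambda\setminus P$. *)

theory Defs
  imports "HOL-Analysis.Analysis"
begin

definition pos_def_quadratic_form :: "(real^2 \<Rightarrow> real) \<Rightarrow> bool" where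
  "pos_def_quadratic_form Q \<longleftrightarrow>
     (\<exists>A :: real^2^2. transpose A = A \<and> Q = (\<lambda>x. x \<bullet> (A *v x))) \<and>
     (\<forall>x. x \<noteq> 0 \<longrightarrow> Q x > 0)"

definition int_span2 :: "real^2 \<Rightarrow> real^2 \<Rightarrow> (real^2) set" where
  "int_span2 u1 u2 = {of_int m *\<^sub>R u1 + of_int n *\<^sub>R u2 | m n :: int. True}"

definition lattice_basis :: "(real^2) set \<Rightarrow> real^2 \<Rightarrow> real^2 \<Rightarrow> bool" where
  "lattice_basis L u1 u2 \<longleftrightarrow> u1 \<noteq> u2 \<and> independent {u1, u2} \<and> L = int_span2 u1 u2"

definition rank2_lattice :: "(real^2) set \<Rightarrow> bool" where
  "rank2_lattice L \<longleftrightarrow> (\<exists>u1 u2. lattice_basis L u1 u2)"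

end

theory Submission
  imports Defs
begin

definition pz :: "(int \<times> int) set \<Rightarrow> bool" where
 "pz T \<longleftrightarrow> (\<forall>p q r s N a b c. q\<in>T \<and> r\<in>T \<and> s\<in>T \<and> p\<noteq>q \<and> p\<noteq>r \<and> p\<noteq>s \<and> N>0 \<and> a\<ge>0 \<and> b\<ge>0 \<and> c\<ge>0
   \<and> a+b+c=N \<and> N* fst p = a* fst q+b* fst r+c* fst s \<and> N* snd p = a* snd q+b* snd r+c* snd s \<longrightarrow> False)"

lemma pzD:
  assumes "pz T" "q\<in>T" "r\<in>T" "s\<in>T" "p\<noteq>q" "p\<noteq>r" "p\<noteq>s" "N>0" "a\<ge>0" "b\<ge>0" "c\<ge>0"
    "a+b+c=N" "N* fst p = a* fst q+b* fst r+c* fst s" "N* snd p = a* snd q+b* snd r+c* snd s"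
  shows False
  using assms unfolding pz_def by blast

context
  fixes T assumes pz: "pz T" and T0: "(0,0)\<in>T" and T1: "(1,0)\<in>T"
begin

lemma row_le1: assumes "(x,y)\<in>T" shows "y \<le> 1"
proof (rule ccontr)
  assume "\<not> y \<le> 1" hence y2: "y \<ge> 2" by simp
  define k where "k = x div y"
  define x' where "x' = x mod y"
  have xe: "x = y*k + x'" unfolding k_def x'_def by simp
  have x'b: "0 \<le> x'" "x' < y" unfolding x'_def using y2 by auto
  show False
  proof (cases "x' = 0")
    case True
    show False
      by (rule pzD[OF pz assms T0 T0, of "(k,1)" y 1 "y-1" 0]) (use y2 True xe in auto)
  next
    case False
    show False
      by (rule pzD[OF pz assms T1 T0, of "(k+1,1)" y 1 "y-x'" "x'-1"]) (use y2 False xe x'b in \<open>auto simp: algebra_simps\<close>)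
  qed
qed

lemma row_ge1: assumes "(x,y)\<in>T" shows "y \<ge> -1"
proof (rule ccontr)
  assume "\<not> y \<ge> -1" hence y2: "-y \<ge> 2" by simp
  define k where "k = x div (-y)"
  define x' where "x' = x mod (-y)"
  have xe: "x = (-y)*k + x'" unfolding k_def x'_def by (metis mult_div_mod_eq)
  have x'b: "0 \<le> x'" "x' < -y" unfolding x'_def using y2 by auto
  show False
  proof (cases "x' = 0")
    case True
    show False
      by (rule pzD[OF pz assms T0 T0, of "(k,-1)" "-y" 1 "-y-1" 0]) (use y2 True xe in auto)
  next
    case False
    show False
      by (rule pzD[OF pz assms T1 T0, of "(k+1,-1)" "-y" 1 "-y-x'" "x'-1"]) (use y2 False xe x'b in \<open>auto simp: algebra_simps\<close>)
  qed
qed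

lemma row0: assumes "(x,0)\<in>T" shows "x = 0 \<or> x = 1"
proof (rule ccontr)
  assume c: "\<not> (x = 0 \<or> x = 1)"
  show False
  proof (cases "x \<ge> 2")
    case True
    show False
      by (rule pzD[OF pz assms T0 T0, of "(1,0)" x 1 "x-1" 0]) (use True in auto)
  next
    case False
    hence "x \<le> -1" using c by auto
    then show False
      by (rule_tac pzD[OF pz assms T1 T1, of "(0,0)" "1-x" 1 "-x" 0]) (use c in auto)
  qed
qed

lemma row_adj: assumes "(a,y)\<in>T" "(a',y)\<in>T" shows "\<bar>a - a'\<bar> \<le> 1"
proof -
  have *: False if "(a,y)\<in>T" "(a',y)\<in>T" "a+2 \<le> a'" for a a'
    by (rule pzD[OF pz that(1,2,1), of "(a+1,y)" "a'-a" "a'-a-1" 1 0]) (use that in \<open>auto simp: algebra_simps\<close>)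
  have "\<not> a+2 \<le> a'" "\<not> a'+2 \<le> a" using *[OF assms] *[OF assms(2,1)] by auto
  then show ?thesis by arith
qed

lemma cross: assumes "(a,1)\<in>T" "(b,-1)\<in>T" shows "a + b = 1"
proof (rule ccontr)
  assume c: "a + b \<noteq> 1"
  show False
  proof (cases "a+b \<ge> 2")
    case True
    show False
      by (rule pzD[OF pz assms T0, of "(1,0)" "a+b" 1 1 "a+b-2"]) (use True in auto)
  next
    case False
    hence "a+b \<le> 0" using c by auto
    then show False
      by (rule_tac pzD[OF pz assms T1, of "(0,0)" "2-(a+b)" 1 1 "-(a+b)"]) auto
  qed
qed

lemma pz_norm:
  "\<exists>(a1::int) (a2::int) (u1::int) (u2::int) (v1::int) (v2::int). \<bar>u1* v2-u2* v1\<bar> = 1 \<and>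
     T \<subseteq> {(a1,a2),(a1+u1,a2+u2),(a1+v1,a2+v2),(a1+u1+v1,a2+u2+v2)}"
proof -
  have rows: "y = -1 \<or> y = 0 \<or> y = 1" if "(x,y)\<in>T" for x y
    using row_le1[OF that] row_ge1[OF that] by linarith
  show ?thesis
  proof (cases "\<exists>b. (b,-1)\<in>T")
    case True
    then obtain b where b: "(b,-1)\<in>T" by auto
    show ?thesis
    proof (cases "\<exists>a. (a,1)\<in>T")
      case True
      then obtain a where a: "(a,1)\<in>T" by auto
      have ab: "a+b=1" using cross[OF a b] .
      have "T \<subseteq> {(0,0),(0+a,0+1),(0+b,0+(-1)),(0+a+b,0+1+(-1))}"
      proof
        fix t assume t: "t\<in>T"
        obtain x y where xy: "t = (x,y)" by force
        show "t \<in> {(0,0),(0+a,0+1),(0+b,0+(-1)),(0+a+b,0+1+(-1))}"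
          using rows[OF t[unfolded xy]] cross[OF a, of x] cross[OF _ b, of x] row0[of x] t ab xy by auto
      qed
      moreover have "\<bar>a*(-1)-1*b\<bar> = (1::int)" using ab by simp
      ultimately show ?thesis by blast
    next
      case False
      define b1 where "b1 = (if (b+1,-1)\<in>T then b else b-1)"
      have "T \<subseteq> {(b1,-1),(b1+1,-1+0),(b1+(-b1),-1+1),(b1+1+(-b1),-1+0+1)}"
      proof
        fix t assume t: "t\<in>T"
        obtain x y where xy: "t = (x,y)" by force
        have "x = b1 \<or> x = b1 + 1" if "y = -1"
        proof -
          have "\<bar>x - b\<bar> \<le> 1" using row_adj[OF t[unfolded xy that] b] .
          moreover have "\<bar>x - (b+1)\<bar> \<le> 1" if "(b+1,-1)\<in>T" using row_adj[OF t[unfolded xy \<open>y=-1\<close>] that] .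
          ultimately show ?thesis unfolding b1_def using b t xy that by (cases "x = b+1"; auto split: if_splits)
        qed
        then show "t \<in> {(b1,-1),(b1+1,-1+0),(b1+(-b1),-1+1),(b1+1+(-b1),-1+0+1)}"
          using rows[OF t[unfolded xy]] False row0[of x] t xy by auto
      qed
      moreover have "\<bar>1*1-0*(-b1)\<bar> = (1::int)" by simp
      ultimately show ?thesis by blast
    qed
  next
    case nb: False
    show ?thesis
    proof (cases "\<exists>a. (a,1)\<in>T")
      case True
      then obtain a where a: "(a,1)\<in>T" by auto
      define a1 where "a1 = (if (a+1,1)\<in>T then a else a-1)"
      have "T \<subseteq> {(0,0),(0+1,0+0),(0+a1,0+1),(0+1+a1,0+0+1)}"
      proof
        fix t assume t: "t\<in>T"
        obtain x y where xy: "t = (x,y)" by force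
        have "x = a1 \<or> x = a1 + 1" if "y = 1"
        proof -
          have "\<bar>x - a\<bar> \<le> 1" using row_adj[OF t[unfolded xy that] a] .
          moreover have "\<bar>x - (a+1)\<bar> \<le> 1" if "(a+1,1)\<in>T" using row_adj[OF t[unfolded xy \<open>y=1\<close>] that] .
          ultimately show ?thesis unfolding a1_def using a t xy that by (cases "x = a+1"; auto split: if_splits)
        qed
        then show "t \<in> {(0,0),(0+1,0+0),(0+a1,0+1),(0+1+a1,0+0+1)}"
          using rows[OF t[unfolded xy]] nb row0[of x] t xy by auto
      qed
      moreover have "\<bar>1*1-0*a1\<bar> = (1::int)" by simp
      ultimately show ?thesis by blast
    next
      case False
      have "T \<subseteq> {(0,0),(0+1,0+0),(0+0,0+1),(0+1+0,0+0+1)}"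
      proof
        fix t assume t: "t\<in>T"
        obtain x y where xy: "t = (x,y)" by force
        then show "t \<in> {(0,0),(0+1,0+0),(0+0,0+1),(0+1+0,0+0+1)}"
          using rows[OF t[unfolded xy]] nb False row0[of x] t xy by auto
      qed
      moreover have "\<bar>1*1-0*0\<bar> = (1::int)" by simp
      ultimately show ?thesis by blast
    qed
  qed
qed

end

lemma pz_gen:
  assumes pz: "pz T"
  shows "\<exists>(a1::int) (a2::int) (u1::int) (u2::int) (v1::int) (v2::int). \<bar>u1* v2-u2* v1\<bar> = 1 \<and>
     T \<subseteq> {(a1,a2),(a1+u1,a2+u2),(a1+v1,a2+v2),(a1+u1+v1,a2+u2+v2)}"
proof (cases "\<exists>p0\<in>T. \<exists>p1\<in>T. p0 \<noteq> p1")
  case False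
  show ?thesis
  proof (cases "T = {}")
    case True
    then show ?thesis by (rule_tac x=0 in exI, rule_tac x=0 in exI, rule_tac x=1 in exI, rule_tac x=0 in exI,
       rule_tac x=0 in exI, rule_tac x=1 in exI) simp
  next
    case ne: False
    then obtain t0 where t0: "t0 \<in> T" by auto
    hence "T \<subseteq> {t0}" using False by auto
    then show ?thesis
      by (rule_tac x="fst t0" in exI, rule_tac x="snd t0" in exI, rule_tac x=1 in exI, rule_tac x=0 in exI,
       rule_tac x=0 in exI, rule_tac x=1 in exI) auto
  qed
next
  case True
  then obtain p0 p1 where p0: "p0\<in>T" and p1: "p1\<in>T" and ne: "p0 \<noteq> p1" by auto
  define m where "m = fst p1 - fst p0"
  define n where "n = snd p1 - snd p0"
  have mn: "m \<noteq> 0 \<or> n \<noteq> 0" using ne unfolding m_def n_def by (auto simp: prod_eq_iff)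
  have g1: "gcd m n = 1"
  proof (rule ccontr)
    assume c: "gcd m n \<noteq> 1"
    define g where "g = gcd m n"
    have gpos: "g \<ge> 2" using c mn unfolding g_def
      by (metis gcd_pos_int int_one_le_iff_zero_less less_le one_add_one zless_imp_add1_zle)
    obtain m' where m': "m = g*m'" unfolding g_def by (meson gcd_dvd1 dvdE)
    obtain n' where n': "n = g*n'" unfolding g_def by (meson gcd_dvd2 dvdE)
    have mn': "m' \<noteq> 0 \<or> n' \<noteq> 0" using mn m' n' by auto
    show False
    proof (rule pzD[OF pz p0 p1 p0, of "(fst p0 + m', snd p0 + n')" g "g-1" 1 0])
      show "(fst p0 + m', snd p0 + n') \<noteq> p0" using mn' by (auto simp: prod_eq_iff)
      show "(fst p0 + m', snd p0 + n') \<noteq> p1"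
      proof
        assume "(fst p0 + m', snd p0 + n') = p1"
        hence "m' = m" "n' = n" unfolding m_def n_def by auto
        hence "m' * (g - 1) = 0" "n'*(g-1) = 0" using m' n' by (simp_all add: algebra_simps)
        then show False using gpos mn' by simp
      qed
    qed (use gpos mn' m' n' in \<open>auto simp: m_def n_def algebra_simps prod_eq_iff\<close>)
  qed
  obtain s t where st: "s*m + t*n = 1" using bezout_int[of m n] g1 by auto
  define f where "f = (\<lambda>(x::int,y::int). (fst p0 + m*x - t*y, snd p0 + n*x + s*y))"
  define h where "h = (\<lambda>(X::int,Y::int). (s*(X - fst p0) + t*(Y - snd p0), -n*(X - fst p0) + m*(Y - snd p0)))"
  have fh: "f (h z) = z" for z
  proof -
    obtain X Y where z: "z = (X,Y)" by force
    have "m * (s * (X - fst p0) + t * (Y - snd p0)) - t * (- n * (X - fst p0) + m * (Y - snd p0)) = (s*m+t*n)*(X - fst p0)"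
      by algebra
    moreover have "n * (s * (X - fst p0) + t * (Y - snd p0)) + s * (- n * (X - fst p0) + m * (Y - snd p0)) = (s*m+t*n)*(Y - snd p0)"
      by algebra
    ultimately show ?thesis unfolding z f_def h_def using st by simp
  qed
  have hf: "h (f z) = z" for z
  proof -
    obtain x y where z: "z = (x,y)" by force
    have "s * (m * x - t * y) + t * (n * x + s * y) = (s*m+t*n)*x" by algebra
    moreover have "- n * (m * x - t * y) + m * (n * x + s * y) = (s*m+t*n)*y" by algebra
    ultimately show ?thesis unfolding z f_def h_def using st by simp
  qed
  define T' where "T' = {z. f z \<in> T}"
  have pzT': "pz T'"
    unfolding pz_def
  proof (intro allI impI)
    fix p q r s' N a b c
    assume H: "q \<in> T' \<and> r \<in> T' \<and> s' \<in> T' \<and> p \<noteq> q \<and> p \<noteq> r \<and> p \<noteq> s' \<and> 0 < N \<and> 0 \<le> a \<and> 0 \<le> b \<and> 0 \<le> c \<and>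
       a + b + c = N \<and> N * fst p = a * fst q + b * fst r + c * fst s' \<and> N * snd p = a * snd q + b * snd r + c * snd s'"
    have inj: "f x \<noteq> f y" if "x \<noteq> y" for x y using that hf by metis
    obtain p1 p2 where pp: "p = (p1,p2)" by force
    obtain q1 q2 where qq: "q = (q1,q2)" by force
    obtain r1 r2 where rr: "r = (r1,r2)" by force
    obtain s1 s2 where ss: "s' = (s1,s2)" by force
    have e1: "N*p1 = a*q1+b*r1+c* s1" and e2: "N*p2 = a*q2+b*r2+c* s2" and eN: "N = a+b+c"
      using H pp qq rr ss by auto
    show False
    proof (rule pzD[OF pz _ _ _ inj inj inj, of q r s' p N a b c])
      show "N * fst (f p) = a * fst (f q) + b * fst (f r) + c * fst (f s')"
      proof -
        have "N * fst (f p) = (a+b+c)* fst p0 + m*(N*p1) - t*(N*p2)" unfolding f_def pp eN by (simp add: algebra_simps)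
        also have "\<dots> = a * fst (f q) + b * fst (f r) + c * fst (f s')"
          unfolding e1 e2 unfolding f_def qq rr ss by (simp add: algebra_simps)
        finally show ?thesis .
      qed
      show "N * snd (f p) = a * snd (f q) + b * snd (f r) + c * snd (f s')"
      proof -
        have "N * snd (f p) = (a+b+c)* snd p0 + n*(N*p1) + s*(N*p2)" unfolding f_def pp eN by (simp add: algebra_simps)
        also have "\<dots> = a * snd (f q) + b * snd (f r) + c * snd (f s')"
          unfolding e1 e2 unfolding f_def qq rr ss by (simp add: algebra_simps)
        finally show ?thesis .
      qed
    qed (use H T'_def in auto)
  qed
  have T0': "(0,0) \<in> T'" unfolding T'_def f_def using p0 by simp
  have T1': "(1,0) \<in> T'" unfolding T'_def f_def m_def n_def using p1 by simp
  obtain a1 a2 u1 u2 v1 v2 where d: "\<bar>u1* v2-u2* v1\<bar> = 1" and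
     sub: "T' \<subseteq> {(a1,a2),(a1+u1,a2+u2),(a1+v1,a2+v2),(a1+u1+v1,a2+u2+v2)}"
    using pz_norm[OF pzT' T0' T1'] by (elim exE conjE) blast
  define A1 where "A1 = fst (f (a1,a2))"
  define A2 where "A2 = snd (f (a1,a2))"
  define U1 where "U1 = m*u1 - t*u2"
  define U2 where "U2 = n*u1 + s*u2"
  define V1 where "V1 = m* v1 - t* v2"
  define V2 where "V2 = n* v1 + s* v2"
  have "U1*V2 - U2*V1 = (s*m+t*n)*(u1* v2-u2* v1)" unfolding U1_def U2_def V1_def V2_def by algebra
  hence dd: "\<bar>U1*V2 - U2*V1\<bar> = 1" using st d by simp
  have "T \<subseteq> {(A1,A2),(A1+U1,A2+U2),(A1+V1,A2+V2),(A1+U1+V1,A2+U2+V2)}"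
  proof
    fix z assume z: "z \<in> T"
    hence "h z \<in> T'" unfolding T'_def using fh by simp
    hence "h z \<in> {(a1,a2),(a1+u1,a2+u2),(a1+v1,a2+v2),(a1+u1+v1,a2+u2+v2)}" using sub by auto
    hence "f (h z) \<in> f ` {(a1,a2),(a1+u1,a2+u2),(a1+v1,a2+v2),(a1+u1+v1,a2+u2+v2)}" by blast
    then show "z \<in> {(A1,A2),(A1+U1,A2+U2),(A1+V1,A2+V2),(A1+U1+V1,A2+U2+V2)}"
      unfolding fh by (auto simp: f_def A1_def A2_def U1_def U2_def V1_def V2_def algebra_simps)
  qed
  then show ?thesis using dd by blast
qed


lemma indep2:
  fixes x y :: "real^2"
  assumes "x \<noteq> y"
  shows "independent {x,y} \<longleftrightarrow> (\<forall>\<alpha> \<beta>. \<alpha> *\<^sub>R x + \<beta> *\<^sub>R y = 0 \<longrightarrow> \<alpha>=0 \<and> \<beta>=0)"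
proof -
  have "independent {x,y} \<longleftrightarrow> y \<noteq> 0 \<and> x \<notin> span {y}"
    using assms by (simp add: independent_insert)
  also have "\<dots> \<longleftrightarrow> (\<forall>\<alpha> \<beta>. \<alpha> *\<^sub>R x + \<beta> *\<^sub>R y = 0 \<longrightarrow> \<alpha>=0 \<and> \<beta>=0)"
  proof
    assume H: "y \<noteq> 0 \<and> x \<notin> span {y}"
    show "\<forall>\<alpha> \<beta>. \<alpha> *\<^sub>R x + \<beta> *\<^sub>R y = 0 \<longrightarrow> \<alpha>=0 \<and> \<beta>=0"
    proof (intro allI impI)
      fix \<alpha> \<beta> :: real assume e: "\<alpha> *\<^sub>R x + \<beta> *\<^sub>R y = 0"
      show "\<alpha>=0 \<and> \<beta>=0"
      proof (cases "\<alpha> = 0")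
        case True then show ?thesis using e H by auto
      next
        case False
        have e2: "\<alpha> *\<^sub>R x = - (\<beta> *\<^sub>R y)" using e by (simp add: eq_neg_iff_add_eq_0)
        have "x = (1/\<alpha>) *\<^sub>R (\<alpha> *\<^sub>R x)" using False by simp
        also have "\<dots> = (- \<beta> / \<alpha>) *\<^sub>R y" unfolding e2 by simp
        finally have "x = (- \<beta> / \<alpha>) *\<^sub>R y" .
        then show ?thesis using H by (metis span_base span_scale singletonI)
      qed
    qed
  next
    assume H: "\<forall>\<alpha> \<beta>. \<alpha> *\<^sub>R x + \<beta> *\<^sub>R y = 0 \<longrightarrow> \<alpha>=0 \<and> \<beta>=0"
    have "y \<noteq> 0" using H[rule_format, of 0 1] by auto
    moreover have "x \<notin> span {y}"
    proof
      assume "x \<in> span {y}"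
      then obtain c where "x = c *\<^sub>R y" by (auto simp: span_singleton)
      then show False using H[rule_format, of 1 "-c"] by simp
    qed
    ultimately show "y \<noteq> 0 \<and> x \<notin> span {y}" by simp
  qed
  finally show ?thesis .
qed

lemma qf_var:
  fixes A :: "real^2^2" and v p q r s :: "real^2"
  assumes "\<alpha>+\<beta>+\<gamma>=1" "p = \<alpha> *\<^sub>R q + \<beta> *\<^sub>R r + \<gamma> *\<^sub>R s"
  defines "Q \<equiv> \<lambda>x. x \<bullet> (A *v x)"
  shows "Q(v-p) + \<alpha>*Q(q-p) + \<beta>*Q(r-p) + \<gamma>*Q(s-p) = \<alpha>*Q(v-q) + \<beta>*Q(v-r) + \<gamma>*Q(v-s)"
proof -
  have g: "\<gamma> = 1 - \<alpha> - \<beta>" using assms(1) by simp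
  have p1: "p$1 = \<alpha>* q$1 + \<beta>* r$1 + \<gamma>* s$1" and p2: "p$2 = \<alpha>* q$2 + \<beta>* r$2 + \<gamma>* s$2"
    using assms(2) by simp_all
  show ?thesis
    unfolding Q_def inner_vec_def matrix_vector_mult_def sum_2 vector_minus_component vec_lambda_beta
      inner_real_def p1 p2 g
    by algebra
qed


lemma lb_coef:
  assumes "lattice_basis L u1 u2" "\<alpha> *\<^sub>R u1 + \<beta> *\<^sub>R u2 = 0"
  shows "\<alpha> = 0 \<and> \<beta> = 0"
  using assms indep2 unfolding lattice_basis_def by blast

lemma basis_change:
  fixes a b c d :: int
  assumes lb: "lattice_basis L u1 u2" and det: "\<bar>a*d - b*c\<bar> = 1"
  shows "lattice_basis L (of_int a *\<^sub>R u1 + of_int b *\<^sub>R u2) (of_int c *\<^sub>R u1 + of_int d *\<^sub>R u2)"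
proof -
  define x where "x = of_int a *\<^sub>R u1 + of_int b *\<^sub>R u2"
  define y where "y = of_int c *\<^sub>R u1 + of_int d *\<^sub>R u2"
  define \<delta> where "\<delta> = a*d - b*c"
  have "\<delta> = 1 \<or> \<delta> = -1" using det unfolding \<delta>_def by arith
  hence dd: "\<delta>*\<delta> = 1" by auto
  have ddr: "real_of_int \<delta> * real_of_int \<delta> = 1" using dd by (metis of_int_1 of_int_mult)
  have dr: "real_of_int \<delta> = real_of_int a * real_of_int d - real_of_int b * real_of_int c" unfolding \<delta>_def by simp
  have xy: "x \<noteq> y"
  proof
    assume "x = y"
    hence "(real_of_int a - real_of_int c) *\<^sub>R u1 + (real_of_int b - real_of_int d) *\<^sub>R u2 = 0"
      unfolding x_def y_def by (simp add: algebra_simps)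
    hence "real_of_int a - real_of_int c = 0 \<and> real_of_int b - real_of_int d = 0" by (rule lb_coef[OF lb])
    then show False using det by simp
  qed
  have ind: "independent {x,y}"
    unfolding indep2[OF xy]
  proof (intro allI impI)
    fix \<alpha> \<beta> assume "\<alpha> *\<^sub>R x + \<beta> *\<^sub>R y = 0"
    hence "(\<alpha> * a + \<beta> * c) *\<^sub>R u1 + (\<alpha> * b + \<beta> * d) *\<^sub>R u2 = 0"
      unfolding x_def y_def by (simp add: algebra_simps)
    hence e: "\<alpha> * a + \<beta> * c = 0" "\<alpha> * b + \<beta> * d = 0" using lb_coef[OF lb] by auto
    have "\<alpha> * \<delta> = 0" unfolding dr using e by algebra
    moreover have "\<beta> * \<delta> = 0" unfolding dr using e by algebra
    moreover have "real_of_int \<delta> \<noteq> 0" using ddr by auto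
    ultimately show "\<alpha> = 0 \<and> \<beta> = 0" by simp
  qed
  have "int_span2 x y = L"
  proof
    show "int_span2 x y \<subseteq> L"
    proof
      fix z assume "z \<in> int_span2 x y"
      then obtain m n where z: "z = of_int m *\<^sub>R x + of_int n *\<^sub>R y" unfolding int_span2_def by auto
      have "z = of_int (m*a + n*c) *\<^sub>R u1 + of_int (m*b+n*d) *\<^sub>R u2"
        unfolding z x_def y_def by (simp add: algebra_simps)
      then show "z \<in> L" using lb unfolding lattice_basis_def int_span2_def by blast
    qed
  next
    show "L \<subseteq> int_span2 x y"
    proof
      fix z assume "z \<in> L"
      then obtain m n where z: "z = of_int m *\<^sub>R u1 + of_int n *\<^sub>R u2" using lb unfolding lattice_basis_def int_span2_def by auto
      have lin: "\<alpha> *\<^sub>R x + \<beta> *\<^sub>R y = (\<alpha>*a + \<beta>*c) *\<^sub>R u1 + (\<alpha>*b+\<beta>*d) *\<^sub>R u2" for \<alpha> \<beta>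
        unfolding x_def y_def by (simp add: algebra_simps)
      have c1: "real_of_int (\<delta>*(m*d - n*c)) * a + real_of_int (\<delta>*(n*a - m*b)) * c = m"
        using ddr dr by simp algebra
      have c2: "real_of_int (\<delta>*(m*d - n*c)) * b + real_of_int (\<delta>*(n*a - m*b)) * d = n"
        using ddr dr by simp algebra
      have "z = of_int (\<delta>*(m*d - n*c)) *\<^sub>R x + of_int (\<delta>*(n*a - m*b)) *\<^sub>R y"
        unfolding lin c1 c2 z ..
      then show "z \<in> int_span2 x y" unfolding int_span2_def by blast
    qed
  qed
  then show ?thesis using xy ind unfolding lattice_basis_def x_def y_def by blast
qed


theorem lemma4p7:
  fixes Q :: "real^2 \<Rightarrow> real" and L :: "(real^2) set" and v :: "real^2"
  assumes "pos_def_quadratic_form Q"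
    and "rank2_lattice L"
  shows "\<exists>w0 u1 u2. w0 \<in> L \<and> lattice_basis L u1 u2 \<and>
           (\<forall>w \<in> L - {w0, w0 + u1, w0 + u2, w0 + u1 + u2}.
              Q (v - w) \<ge> (INF w'\<in>L. Q (v - w')) + (INF w'\<in>L - {0}. Q w'))"
proof -
  obtain A where Qd: "Q = (\<lambda>x. x \<bullet> (A *v x))" and Qp: "\<forall>x. x\<noteq>0 \<longrightarrow> Q x > 0"
    using assms(1) unfolding pos_def_quadratic_form_def by blast
  obtain u1 u2 where lb: "lattice_basis L u1 u2" using assms(2) unfolding rank2_lattice_def by blast
  have Q0: "Q x \<ge> 0" for x
  proof (cases "x = 0")
    case True then show ?thesis unfolding Qd by simp
  next
    case False then show ?thesis using Qp by (simp add: less_imp_le)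
  qed
  define c where "c = (INF w'\<in>L. Q (v - w'))"
  define lam where "lam = (INF w'\<in>L - {0}. Q w')"
  have L_iff: "w \<in> L \<longleftrightarrow> (\<exists>m n. w = of_int m *\<^sub>R u1 + of_int n *\<^sub>R u2)" for w
    using lb unfolding lattice_basis_def int_span2_def by auto
  have Ldiff: "q - p \<in> L" if hpq: "p \<in> L" "q \<in> L" for p q
  proof -
    obtain m n where p: "p = of_int m *\<^sub>R u1 + of_int n *\<^sub>R u2" using hpq(1) L_iff by auto
    obtain m' n' where q: "q = of_int m' *\<^sub>R u1 + of_int n' *\<^sub>R u2" using hpq(2) L_iff by auto
    have "q - p = of_int (m'-m) *\<^sub>R u1 + of_int (n'-n) *\<^sub>R u2" unfolding p q by (simp add: algebra_simps)
    then show ?thesis using L_iff by blast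
  qed
  have cle: "c \<le> Q (v - p)" if "p \<in> L" for p
    unfolding c_def by (rule cINF_lower[OF bdd_belowI2[of _ 0] that]) (rule Q0)
  have lle: "lam \<le> Q x" if "x \<in> L" "x \<noteq> 0" for x
    unfolding lam_def by (rule cINF_lower[OF bdd_belowI2[of _ 0]]) (use Q0 that in auto)
  define S where "S = {w\<in>L. Q (v - w) < c + lam}"
  have Sprop: False if H: "p\<in>L" "q\<in>S" "r\<in>S" "s\<in>S" "p\<noteq>q" "p\<noteq>r" "p\<noteq>s" "\<alpha>\<ge>0" "\<beta>\<ge>0" "\<gamma>\<ge>0"
     "\<alpha>+\<beta>+\<gamma>=1" "p = \<alpha> *\<^sub>R q + \<beta> *\<^sub>R r + \<gamma> *\<^sub>R s" for p q r s \<alpha> \<beta> \<gamma>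
  proof -
    have var: "Q(v-p) + \<alpha>*Q(q-p) + \<beta>*Q(r-p) + \<gamma>*Q(s-p) = \<alpha>*Q(v-q) + \<beta>*Q(v-r) + \<gamma>*Q(v-s)"
      using qf_var[OF H(11,12), where A=A and v=v] unfolding Qd by simp
    have qL: "q \<in> L" "r \<in> L" "s \<in> L" using H unfolding S_def by auto
    have l1: "lam \<le> Q(q-p)" using lle[OF Ldiff[OF H(1) qL(1)]] H(5) by auto
    have l2: "lam \<le> Q(r-p)" using lle[OF Ldiff[OF H(1) qL(2)]] H(6) by auto
    have l3: "lam \<le> Q(s-p)" using lle[OF Ldiff[OF H(1) qL(3)]] H(7) by auto
    have "\<alpha>*lam + \<beta>*lam + \<gamma>*lam \<le> \<alpha>*Q(q-p) + \<beta>*Q(r-p) + \<gamma>*Q(s-p)"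
      using mult_left_mono[OF l1 H(8)] mult_left_mono[OF l2 H(9)] mult_left_mono[OF l3 H(10)] by linarith
    hence lsum: "lam \<le> \<alpha>*Q(q-p) + \<beta>*Q(r-p) + \<gamma>*Q(s-p)" using H(11) by (metis distrib_right mult_1)
    define K where "K = c + lam"
    have k1: "Q(v-q) < K" "Q(v-r) < K" "Q(v-s) < K" using H unfolding S_def K_def by auto
    have ineq: "\<alpha>*Q(v-q) + \<beta>*Q(v-r) + \<gamma>*Q(v-s) < K"
    proof -
      have a1: "\<alpha>*Q(v-q) \<le> \<alpha>*K" "\<beta>*Q(v-r) \<le> \<beta>*K" "\<gamma>*Q(v-s) \<le> \<gamma>*K"
        using mult_left_mono[OF less_imp_le[OF k1(1)] H(8)] mult_left_mono[OF less_imp_le[OF k1(2)] H(9)]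
          mult_left_mono[OF less_imp_le[OF k1(3)] H(10)] by auto
      have "\<alpha> > 0 \<or> \<beta> > 0 \<or> \<gamma> > 0" using H(8-11) by linarith
      hence "\<alpha>*Q(v-q) < \<alpha>*K \<or> \<beta>*Q(v-r) < \<beta>*K \<or> \<gamma>*Q(v-s) < \<gamma>*K"
        using k1 by auto
      hence "\<alpha>*Q(v-q) + \<beta>*Q(v-r) + \<gamma>*Q(v-s) < \<alpha>*K + \<beta>*K + \<gamma>*K" using a1 by linarith
      also have "\<dots> = K" using H(11) by (metis distrib_right mult_1)
      finally show ?thesis .
    qed
    have "Q(v-p) < c" using var lsum ineq unfolding K_def by linarith
    then show False using cle[OF H(1)] by linarith
  qed
  define \<phi> where "\<phi> = (\<lambda>z::int\<times>int. of_int (fst z) *\<^sub>R u1 + of_int (snd z) *\<^sub>R u2)"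
  have \<phi>inj: "z = z'" if "\<phi> z = \<phi> z'" for z z'
  proof -
    have "(of_int (fst z) - of_int (fst z')) *\<^sub>R u1 + (of_int (snd z) - of_int (snd z')) *\<^sub>R u2 = 0"
      using that unfolding \<phi>_def by (simp add: algebra_simps)
    hence "real_of_int (fst z) - real_of_int (fst z') = 0 \<and> real_of_int (snd z) - real_of_int (snd z') = 0"
      by (rule lb_coef[OF lb])
    then show ?thesis by (simp add: prod_eq_iff)
  qed
  have \<phi>L: "\<phi> z \<in> L" for z using L_iff unfolding \<phi>_def by blast
  have L\<phi>: "\<exists>z. w = \<phi> z" if "w \<in> L" for w
    using that L_iff unfolding \<phi>_def by (metis fst_conv snd_conv)
  define T where "T = {z. \<phi> z \<in> S}"
  have pzT: "pz T"
    unfolding pz_def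
  proof (intro allI impI)
    fix p q r s N a b cc
    assume H: "q \<in> T \<and> r \<in> T \<and> s \<in> T \<and> p \<noteq> q \<and> p \<noteq> r \<and> p \<noteq> s \<and> 0 < N \<and> 0 \<le> a \<and> 0 \<le> b \<and> 0 \<le> cc \<and>
       a + b + cc = N \<and> N * fst p = a * fst q + b * fst r + cc * fst s \<and> N * snd p = a * snd q + b * snd r + cc * snd s"
    define \<alpha> where "\<alpha> = real_of_int a / real_of_int N"
    define \<beta> where "\<beta> = real_of_int b / real_of_int N"
    define \<gamma> where "\<gamma> = real_of_int cc / real_of_int N"
    have Np: "real_of_int N > 0" using H by simp
    have e1: "real_of_int N * of_int (fst p) = of_int a * of_int (fst q) + of_int b * of_int (fst r) + of_int cc * of_int (fst s)"
      using H by (metis of_int_add of_int_mult)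
    have e2: "real_of_int N * of_int (snd p) = of_int a * of_int (snd q) + of_int b * of_int (snd r) + of_int cc * of_int (snd s)"
      using H by (metis of_int_add of_int_mult)
    have eN: "real_of_int N = of_int a + of_int b + of_int cc" using H by (metis of_int_add)
    have p1: "real_of_int (fst p) = \<alpha> * of_int (fst q) + \<beta> * of_int (fst r) + \<gamma> * of_int (fst s)"
      unfolding \<alpha>_def \<beta>_def \<gamma>_def using Np e1 by (simp add: field_simps)
    have p2: "real_of_int (snd p) = \<alpha> * of_int (snd q) + \<beta> * of_int (snd r) + \<gamma> * of_int (snd s)"
      unfolding \<alpha>_def \<beta>_def \<gamma>_def using Np e2 by (simp add: field_simps)
    have "\<alpha> + \<beta> + \<gamma> = (of_int a + of_int b + of_int cc) / of_int N"
      unfolding \<alpha>_def \<beta>_def \<gamma>_def by (simp add: add_divide_distrib)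
    hence sum1: "\<alpha> + \<beta> + \<gamma> = 1" using eN Np by simp
    have comb: "\<phi> p = \<alpha> *\<^sub>R \<phi> q + \<beta> *\<^sub>R \<phi> r + \<gamma> *\<^sub>R \<phi> s"
      unfolding \<phi>_def vec_eq_iff forall_2 using p1 p2 by (simp add: algebra_simps)
    show False
    proof (rule Sprop[OF \<phi>L _ _ _ _ _ _ _ _ _ sum1 comb])
      show "\<phi> q \<in> S" "\<phi> r \<in> S" "\<phi> s \<in> S" using H T_def by auto
      show "\<phi> p \<noteq> \<phi> q" "\<phi> p \<noteq> \<phi> r" "\<phi> p \<noteq> \<phi> s" using H \<phi>inj by metis+
      show "\<alpha> \<ge> 0" "\<beta> \<ge> 0" "\<gamma> \<ge> 0" unfolding \<alpha>_def \<beta>_def \<gamma>_def using H Np by auto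
    qed
  qed
  obtain a1 a2 p1 p2 q1 q2 where d: "\<bar>p1*q2-p2*q1\<bar> = 1" and
     sub: "T \<subseteq> {(a1,a2),(a1+p1,a2+p2),(a1+q1,a2+q2),(a1+p1+q1,a2+p2+q2)}"
    using pz_gen[OF pzT] by (elim exE conjE) blast
  define w0 where "w0 = \<phi> (a1,a2)"
  define U where "U = \<phi> (p1,p2)"
  define V where "V = \<phi> (q1,q2)"
  have lbUV: "lattice_basis L U V" unfolding U_def V_def \<phi>_def using basis_change[OF lb d] by simp
  have img: "\<phi> ` {(a1,a2),(a1+p1,a2+p2),(a1+q1,a2+q2),(a1+p1+q1,a2+p2+q2)} = {w0, w0 + U, w0 + V, w0 + U + V}"
    unfolding w0_def U_def V_def \<phi>_def by (simp add: algebra_simps)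
  have main: "c + lam \<le> Q (v - w)" if hw: "w \<in> L - {w0, w0 + U, w0 + V, w0 + U + V}" for w
  proof (rule ccontr)
    assume "\<not> c + lam \<le> Q (v - w)"
    hence "w \<in> S" using hw unfolding S_def by auto
    moreover obtain z where z: "w = \<phi> z" using L\<phi> hw by blast
    ultimately have "z \<in> T" unfolding T_def by simp
    hence "w \<in> {w0, w0 + U, w0 + V, w0 + U + V}" using sub z img by blast
    then show False using hw by blast
  qed
  show ?thesis
    by (rule exI[of _ w0], rule exI[of _ U], rule exI[of _ V]) (use \<phi>L lbUV main in \<open>auto simp: w0_def c_def lam_def\<close>)
qed

end
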